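(* Let $G$ be a group with identity $e$, let $A$ be a set with at least two elements, and let $\tau : A^G \to A^G$ be a lazy cellular automaton with unique active transition $p \in A^S$ (where $S \subseteq G$ is finite with $e \in S$) and writing symbol $a \in A \setminus \{ p(e) \}$. Assume that $p$ is quasi-constant with non-constant element $r \in S$. \begin{enumerate} \item If $a \neq p(s)$ for all $s \in S$, then $\mathrm{ord}(\tau)=2$. \item If $r \neq e$ and $a= p(r)$, then $\mathrm{ord}(\tau)$ is finite if and only if there exists $n \geq 2$ such that $r^n \in S$. Moreover, in this case, $\mathrm{ord}(\tau) = \min \{ n \geq 2 : r^n \in S \}$. \item If $r = e$ and $a = p(s)$ for all $s \in S \setminus \{e\}$, then $\mathrm{ord}(\tau)$ is finite if and only if there exists $n \geq 2$ such that for every word $w\in (S\setminus\{e\})^{n-1}$ there exists a subword $v\sqsubseteq w$ with $\theta(v)^{-1}\in S$. In that case, $\mathrm{ord}(\tau)$ is the minimum $n \geq 2$ satisfying this property. \end{enumerate}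
   Context: $A^G$ is the set of all maps $G \to A$, with the shift action $(g\cdot x)(h) := x(hg)$ for $g,h \in G$, $x \in A^G$. A cellular automaton is a map $\tau : A^G \to A^G$ for which there are a finite $S \subseteq G$ and a local map $\mu : A^S \to A$ with $\tau(x)(g) = \mu((g\cdot x)|_S)$ for all $x \in A^G$, $g \in G$. $\tau$ is lazy if there is such a local defining map $\mu : A^S \to A$ with $e \in S$ and a pattern $p \in A^S$ such that for all $z \in A^S$: $\mu(z) = z(e)$ if and only if $z \neq p$; then $p$ is the unique active transition of $\tau$ and $a := \mu(p) \in A \setminus\{p(e)\}$ is its writing symbol. $\tau^k$ denotes the $k$-fold composition ($\tau^0$ the identity), and $\mathrm{ord}(\tau) := |\{\tau^k : k \in \mathbb{N}\}|$ with $\mathbb{N} = \{0,1,2,\dots\}$. A pattern $p \in A^S$ is quasi-constant if $p$ is not constant and there is $r \in S$ such that $p|_{S\setminus\{r\}}$ is constant; such $r$ is the non-constant element of $p$. A word of length $m$ on $T \subseteq G$ is an element $(s_1,\dots,s_m) \in T^m$; $\theta(s_1,\dots,s_m) := s_1 s_2 \cdots s_m \in G$; $v$ is a subword of $w=(s_1,\dots,s_m)$, written $v \sqsubseteq w$, if $v = (s_i, s_{i+1},\dots,s_j)$ for some $1 \le i \le j \le m$. *)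

theory Defs
  imports Main "HOL-Library.FuncSet" "HOL-Library.Sublist"
begin

text \<open>The group G is a type of class group_add (operation written +, identity 0,
  inverse -); the alphabet A is a type 'a.
  Patterns in A^S are functions in extensional S (value undefined outside S).\<close>

definition shift :: "'g::group_add \<Rightarrow> ('g \<Rightarrow> 'a) \<Rightarrow> ('g \<Rightarrow> 'a)" where
  "shift g x = (\<lambda>h. x (h + g))"

definition local_defining_map ::
  "(('g::group_add \<Rightarrow> 'a) \<Rightarrow> ('g \<Rightarrow> 'a)) \<Rightarrow> 'g set \<Rightarrow> (('g \<Rightarrow> 'a) \<Rightarrow> 'a) \<Rightarrow> bool" where
  "local_defining_map \<tau> S \<mu> \<longleftrightarrow> finite S \<and> (\<forall>x g. \<tau> x g = \<mu> (restrict (shift g x) S))"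

definition lazy_with ::
  "(('g::group_add \<Rightarrow> 'a) \<Rightarrow> ('g \<Rightarrow> 'a)) \<Rightarrow> 'g set \<Rightarrow> (('g \<Rightarrow> 'a) \<Rightarrow> 'a) \<Rightarrow> ('g \<Rightarrow> 'a) \<Rightarrow> bool" where
  "lazy_with \<tau> S \<mu> p \<longleftrightarrow> local_defining_map \<tau> S \<mu> \<and> 0 \<in> S \<and> p \<in> extensional S \<and>
     (\<forall>z \<in> extensional S. (\<mu> z = z 0 \<longleftrightarrow> z \<noteq> p))"

definition powers_set :: "('b \<Rightarrow> 'b) \<Rightarrow> ('b \<Rightarrow> 'b) set" where
  "powers_set \<tau> = {\<tau> ^^ k | k. True}"

definition ord :: "('b \<Rightarrow> 'b) \<Rightarrow> nat" where
  "ord \<tau> = card (powers_set \<tau>)"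

definition constant_on_set :: "'g set \<Rightarrow> ('g \<Rightarrow> 'a) \<Rightarrow> bool" where
  "constant_on_set S p \<longleftrightarrow> (\<exists>c. \<forall>s\<in>S. p s = c)"

definition quasi_constant_at :: "'g set \<Rightarrow> ('g \<Rightarrow> 'a) \<Rightarrow> 'g \<Rightarrow> bool" where
  "quasi_constant_at S p r \<longleftrightarrow> r \<in> S \<and> \<not> constant_on_set S p \<and> constant_on_set (S - {r}) p"

definition gpow :: "nat \<Rightarrow> 'g::group_add \<Rightarrow> 'g" where
  "gpow n r = sum_list (replicate n r)"

definition theta :: "'g::group_add list \<Rightarrow> 'g" where
  "theta w = sum_list w"

text \<open>v is a subword of w: a nonempty contiguous block.\<close>
definition subword :: "'g list \<Rightarrow> 'g list \<Rightarrow> bool" where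
  "subword v w \<longleftrightarrow> v \<noteq> [] \<and> sublist v w"

definition word_property :: "'g::group_add set \<Rightarrow> nat \<Rightarrow> bool" where
  "word_property S n \<longleftrightarrow> (\<forall>w. length w = n - 1 \<and> set w \<subseteq> S - {0} \<longrightarrow>
      (\<exists>v. subword v w \<and> - theta v \<in> S))"

end

theory Submission
  imports Defs
begin

lemma gpow_0[simp]: "gpow 0 r = 0" by (simp add: gpow_def)
lemma gpow_Suc: "gpow (Suc j) r = r + gpow j r" by (simp add: gpow_def)
lemma gpow_add: "gpow (i + j) r = gpow i r + gpow j r"
  by (simp add: gpow_def replicate_add)
lemma gpow_diff: "i \<le> j \<Longrightarrow> gpow j r - gpow i r = gpow (j - i) r"
proof -
  assume "i \<le> j"
  then have "gpow j r = gpow (j - i) r + gpow i r" using gpow_add[of "j-i" i r] by simp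
  then show ?thesis by (simp add: algebra_simps)
qed

locale lca =
  fixes \<tau> :: "('g::group_add \<Rightarrow> 'a) \<Rightarrow> ('g \<Rightarrow> 'a)" and S :: "'g set"
    and p :: "'g \<Rightarrow> 'a" and a :: 'a
  assumes step: "\<And>y g. \<tau> y g = (if (\<forall>s\<in>S. y (s+g) = p s) then a else y g)"
    and a_ne: "a \<noteq> p 0" and zS: "0 \<in> S"
begin

lemma change:
  assumes "\<tau> y g \<noteq> y g"
  shows "\<tau> y g = a" "y g = p 0" "\<forall>s\<in>S. y (s+g) = p s"
proof -
  have c: "\<forall>s\<in>S. y (s+g) = p s" using assms step[of y g] by (auto split: if_splits)
  then show "\<forall>s\<in>S. y (s+g) = p s" .
  show "\<tau> y g = a" using c step[of y g] by simp
  show "y g = p 0" using c zS by force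
qed

lemma keep_a: "y g = a \<Longrightarrow> \<tau> y g = a"
  using change a_ne by metis

lemma persist: "(\<tau>^^i) x g = a \<Longrightarrow> i \<le> j \<Longrightarrow> (\<tau>^^j) x g = a"
proof (induction j)
  case 0 then show ?case by simp
next
  case (Suc j)
  show ?case
  proof (cases "i = Suc j")
    case True then show ?thesis using Suc by simp
  next
    case False
    then have "(\<tau>^^j) x g = a" using Suc by simp
    then show ?thesis by (simp add: keep_a)
  qed
qed

lemma stab:
  assumes "\<tau>^^m = \<tau>^^m'" "m < m'"
  shows "\<tau>^^(Suc m) = \<tau>^^m"
proof (rule ext, rule ext)
  fix x g
  show "(\<tau>^^Suc m) x g = (\<tau>^^m) x g"
  proof (rule ccontr)
    assume ne: "\<not> ?thesis"
    hence "\<tau> ((\<tau>^^m) x) g \<noteq> (\<tau>^^m) x g" by simp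
    hence 1: "(\<tau>^^Suc m) x g = a" and 2: "(\<tau>^^m) x g = p 0" using change by auto
    have "(\<tau>^^m') x g = a" using persist[OF 1] assms(2) by simp
    thus False using assms(1) 2 a_ne by metis
  qed
qed

lemma invariant:
  assumes "\<tau>^^(Suc m) = \<tau>^^m"
  shows "m \<le> k \<Longrightarrow> \<tau>^^k = \<tau>^^m"
proof (induction k rule: dec_induct)
  case base then show ?case by simp
next
  case (step k)
  have "\<tau>^^Suc k = \<tau> \<circ> \<tau>^^k" by simp
  also have "\<dots> = \<tau> \<circ> \<tau>^^m" using step.IH by simp
  also have "\<dots> = \<tau>^^Suc m" by simp
  finally show ?case using assms by simp
qed

lemma powers_range: "powers_set \<tau> = range (\<lambda>k. \<tau>^^k)"
  unfolding powers_set_def by auto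

lemma ord_eq:
  assumes e: "\<tau>^^(Suc (Suc M)) = \<tau>^^(Suc M)" and ne: "\<tau>^^(Suc M) \<noteq> \<tau>^^M"
  shows "ord \<tau> = Suc (Suc M)"
proof -
  have ps: "powers_set \<tau> = (\<lambda>k. \<tau>^^k) ` {..Suc M}"
  proof
    show "powers_set \<tau> \<subseteq> (\<lambda>k. \<tau>^^k) ` {..Suc M}"
    proof
      fix f assume "f \<in> powers_set \<tau>"
      then obtain k where k: "f = \<tau>^^k" unfolding powers_set_def by auto
      show "f \<in> (\<lambda>k. \<tau>^^k) ` {..Suc M}"
      proof (cases "k \<le> Suc M")
        case True then show ?thesis using k by auto
      next
        case False
        then have "\<tau>^^k = \<tau>^^Suc M" using invariant[OF e, of k] by simp
        then show ?thesis using k by (metis atMost_iff image_eqI order_refl)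
      qed
    qed
  qed (auto simp: powers_set_def)
  have neq: "\<tau>^^i \<noteq> \<tau>^^j" if "i < j" "j \<le> Suc M" for i j
  proof
    assume "\<tau>^^i = \<tau>^^j"
    then have s: "\<tau>^^Suc i = \<tau>^^i" using stab that(1) by blast
    have i: "i \<le> M" using that by simp
    have "\<tau>^^Suc M = \<tau>^^i" using invariant[OF s, of "Suc M"] i by simp
    moreover have "\<tau>^^M = \<tau>^^i" using invariant[OF s, of M] i by simp
    ultimately show False using ne by metis
  qed
  have "inj_on (\<lambda>k. \<tau>^^k) {..Suc M}"
  proof (rule inj_onI)
    fix i j assume "i \<in> {..Suc M}" "j \<in> {..Suc M}" "\<tau>^^i = \<tau>^^j"
    then show "i = j" using neq[of i j] neq[of j i] by (metis atMost_iff linorder_neqE_nat)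
  qed
  then show ?thesis unfolding ord_def ps by (simp add: card_image)
qed

lemma fin_iff: "finite (powers_set \<tau>) \<longleftrightarrow> (\<exists>m. \<tau>^^Suc m = \<tau>^^m)"
proof
  assume fin: "finite (powers_set \<tau>)"
  show "\<exists>m. \<tau>^^Suc m = \<tau>^^m"
  proof (rule ccontr)
    assume nex: "\<not> ?thesis"
    have "inj (\<lambda>k. \<tau>^^k)"
    proof (rule injI)
      fix i j assume eq: "\<tau>^^i = \<tau>^^j"
      show "i = j"
      proof (cases i j rule: linorder_cases)
        case less then show ?thesis using stab[OF eq] nex by blast
      next
        case greater then show ?thesis using stab[OF eq[symmetric]] nex by blast
      qed
    qed
    then have "finite (UNIV :: nat set)" using fin powers_range finite_imageD by metis
    then show False by simp
  qed
next
  assume "\<exists>m. \<tau>^^Suc m = \<tau>^^m"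
  then obtain m where e: "\<tau>^^Suc m = \<tau>^^m" by blast
  have "powers_set \<tau> \<subseteq> (\<lambda>k. \<tau>^^k) ` {..m}"
  proof
    fix f assume "f \<in> powers_set \<tau>"
    then obtain k where k: "f = \<tau>^^k" unfolding powers_set_def by auto
    show "f \<in> (\<lambda>k. \<tau>^^k) ` {..m}"
    proof (cases "k \<le> m")
      case True then show ?thesis using k by auto
    next
      case False
      then have "\<tau>^^k = \<tau>^^m" using invariant[OF e, of k] by simp
      then show ?thesis using k by (metis atMost_iff image_eqI order_refl)
    qed
  qed
  then show "finite (powers_set \<tau>)" using finite_subset by blast
qed

lemma combine:
  fixes Q :: "nat \<Rightarrow> bool"
  assumes up: "\<And>n. n \<ge> 2 \<Longrightarrow> Q n \<Longrightarrow> \<tau>^^n = \<tau>^^(n-1)"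
    and low: "\<And>t. (\<forall>k. 2 \<le> k \<longrightarrow> k \<le> Suc t \<longrightarrow> \<not> Q k) \<Longrightarrow> \<tau>^^Suc t \<noteq> \<tau>^^t"
  shows "(finite (powers_set \<tau>) \<longleftrightarrow> (\<exists>n\<ge>2. Q n))
     \<and> ((\<exists>n\<ge>2. Q n) \<longrightarrow> ord \<tau> = (LEAST n. n \<ge> 2 \<and> Q n))"
proof (intro conjI impI iffI)
  assume "finite (powers_set \<tau>)"
  then obtain m where "\<tau>^^Suc m = \<tau>^^m" using fin_iff by blast
  then show "\<exists>n\<ge>2. Q n" using low[of m] by blast
next
  assume "\<exists>n\<ge>2. Q n"
  then obtain n where n: "n \<ge> 2" "Q n" by blast
  then have "\<tau>^^Suc (n-1) = \<tau>^^(n-1)" using up by simp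
  then show "finite (powers_set \<tau>)" using fin_iff by blast
next
  assume ex: "\<exists>n\<ge>2. Q n"
  define n where "n = (LEAST n. n \<ge> 2 \<and> Q n)"
  have n: "n \<ge> 2" "Q n" using LeastI_ex[of "\<lambda>n. n \<ge> 2 \<and> Q n"] ex unfolding n_def by auto
  have nl: "\<And>k. k < n \<Longrightarrow> \<not> (k \<ge> 2 \<and> Q k)" unfolding n_def by (rule not_less_Least)
  obtain M where M: "n = Suc (Suc M)" using n(1) by (metis add_2_eq_Suc le_Suc_ex)
  have e: "\<tau>^^Suc (Suc M) = \<tau>^^Suc M" using up[OF n] M by simp
  have "\<tau>^^Suc M \<noteq> \<tau>^^M" using low[of M] nl M by auto
  then show "ord \<tau> = (LEAST n. n \<ge> 2 \<and> Q n)" using ord_eq[OF e] M n_def by simp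
qed

lemma back1:
  assumes "\<tau> (\<tau> y) h \<noteq> \<tau> y h"
  shows "\<exists>s\<in>S. s \<noteq> 0 \<and> p s = a \<and> \<tau> y (s+h) \<noteq> y (s+h)"
proof (rule ccontr)
  assume nex: "\<not> ?thesis"
  have c: "\<forall>s\<in>S. \<tau> y (s+h) = p s" and h0: "\<tau> y h = p 0"
    using change[OF assms] by simp_all
  have "\<forall>s\<in>S. y (s+h) = p s"
  proof
    fix s assume s: "s \<in> S"
    show "y (s+h) = p s"
    proof (rule ccontr)
      assume ne: "y (s+h) \<noteq> p s"
      then have ne2: "\<tau> y (s+h) \<noteq> y (s+h)" using c s by simp
      then have "\<tau> y (s+h) = a" using change by blast
      then have "p s = a" using c s by simp
      moreover have "s \<noteq> 0"
      proof
        assume "s = 0"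
        then have "\<tau> y h \<noteq> y h" using ne2 by simp
        then have "\<tau> y h = a" using change(1) by blast
        then show False using h0 a_ne by simp
      qed
      ultimately show False using nex s ne2 by blast
    qed
  qed
  then have "\<tau> y h = a" using step[of y h] by simp
  then show False using h0 a_ne by simp
qed

lemma case1:
  assumes na: "\<forall>s\<in>S. a \<noteq> p s"
  shows "ord \<tau> = 2"
proof -
  have idem: "\<tau> (\<tau> y) = \<tau> y" for y
  proof
    fix g
    show "\<tau> (\<tau> y) g = \<tau> y g"
    proof (rule ccontr)
      assume ne: "\<tau> (\<tau> y) g \<noteq> \<tau> y g"
      then have c: "\<forall>s\<in>S. \<tau> y (s+g) = p s" and g0: "\<tau> y g = p 0" using change by blast+
      have "\<forall>s\<in>S. y (s+g) = p s"
      proof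
        fix s assume s: "s \<in> S"
        have "\<tau> y (s+g) = y (s+g)"
        proof (rule ccontr)
          assume "\<tau> y (s+g) \<noteq> y (s+g)"
          then have "\<tau> y (s+g) = a" using change(1) by blast
          then show False using c s na by auto
        qed
        then show "y (s+g) = p s" using c s by simp
      qed
      then have "\<tau> y g = a" using step[of y g] by simp
      then show False using g0 a_ne by simp
    qed
  qed
  define x where "x = (\<lambda>h. if h \<in> S then p h else p 0)"
  have "\<forall>s\<in>S. x (s+0) = p s" unfolding x_def by simp
  then have "\<tau> x 0 = a" using step[of x 0] by simp
  moreover have "x 0 = p 0" unfolding x_def using zS by simp
  ultimately have "\<tau> \<noteq> id" using a_ne by auto
  then have ne: "\<tau>^^Suc 0 \<noteq> \<tau>^^0" by simp
  have e: "\<tau>^^Suc (Suc 0) = \<tau>^^Suc 0" using idem by (simp add: fun_eq_iff)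
  show ?thesis using ord_eq[OF e ne] by simp
qed

end

locale lca2 = lca +
  fixes r
  assumes r0: "r \<noteq> 0" and rS: "r \<in> S" and pr: "p r = a"
    and pc: "\<And>s. s \<in> S \<Longrightarrow> s \<noteq> r \<Longrightarrow> p s = p 0"
begin

lemma pa_r: "s \<in> S \<Longrightarrow> p s = a \<Longrightarrow> s = r"
  using pc a_ne by metis

lemma back2:
  assumes ch: "(\<tau>^^Suc t) x g \<noteq> (\<tau>^^t) x g"
  shows "j \<le> t \<Longrightarrow> (\<tau>^^Suc (t-j)) x (gpow j r + g) \<noteq> (\<tau>^^(t-j)) x (gpow j r + g)"
proof (induction j)
  case 0 then show ?case using ch by simp
next
  case (Suc j)
  define u where "u = t - Suc j"
  have tj: "t - j = Suc u" using Suc.prems unfolding u_def by simp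
  define h where "h = gpow j r + g"
  have "(\<tau>^^Suc (Suc u)) x h \<noteq> (\<tau>^^Suc u) x h" using Suc tj unfolding h_def by simp
  then have "\<tau> (\<tau> ((\<tau>^^u) x)) h \<noteq> \<tau> ((\<tau>^^u) x) h" by simp
  from back1[OF this] obtain s where s: "s \<in> S" "p s = a"
    "\<tau> ((\<tau>^^u) x) (s+h) \<noteq> (\<tau>^^u) x (s+h)" by blast
  have "s = r" using pa_r s by blast
  moreover have "gpow (Suc j) r + g = r + h" unfolding h_def by (simp add: gpow_Suc add.assoc)
  ultimately show ?case using s(3) unfolding u_def by simp
qed

lemma upper2:
  assumes n: "n \<ge> 2" and nS: "gpow n r \<in> S"
  shows "\<tau>^^n = \<tau>^^(n-1)"
proof -
  obtain m where m: "n = Suc m" "m \<ge> 1" using n by (metis One_nat_def Suc_le_D Suc_le_mono numeral_2_eq_2)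
  have "(\<tau>^^Suc m) x g = (\<tau>^^m) x g" for x g
  proof (rule ccontr)
    assume ch: "(\<tau>^^Suc m) x g \<noteq> (\<tau>^^m) x g"
    define h where "h = gpow m r + g"
    have "(\<tau>^^Suc 0) x h \<noteq> (\<tau>^^0) x h" using back2[OF ch, of m] unfolding h_def by simp
    then have chh: "\<tau> x h \<noteq> x h" by simp
    then have "x (r + h) = p r" using change(3) rS by blast
    moreover have rh: "r + h = gpow n r + g" unfolding h_def m by (simp add: gpow_Suc add.assoc)
    ultimately have "(\<tau>^^0) x (gpow n r + g) = a" using pr by simp
    then have A: "(\<tau>^^m) x (gpow n r + g) = a" using persist by blast
    have "\<tau> ((\<tau>^^m) x) g \<noteq> (\<tau>^^m) x g" using ch by simp
    then have C: "\<forall>s\<in>S. (\<tau>^^m) x (s+g) = p s" and C0: "(\<tau>^^m) x g = p 0"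
      using change by blast+
    have "p (gpow n r) = a" using A C nS by metis
    then have "gpow n r = r" using pa_r nS by blast
    then have "r + gpow m r = r + 0" using m(1) gpow_Suc[of m r] by simp
    then have "gpow m r = 0" by (metis add_left_cancel)
    then have "h = g" unfolding h_def by simp
    then have "(\<tau>^^1) x g = a" using change(1)[OF chh] by simp
    then have "(\<tau>^^m) x g = a" using persist m(2) by blast
    then show False using C0 a_ne by simp
  qed
  then show ?thesis using m by (simp add: fun_eq_iff del: funpow.simps)
qed

lemma lower2:
  assumes H: "\<forall>k. 2 \<le> k \<longrightarrow> k \<le> Suc t \<longrightarrow> gpow k r \<notin> S"
  shows "\<tau>^^Suc t \<noteq> \<tau>^^t"
proof -
  define D where "D s = {gpow j r | j. Suc t - s \<le> j \<and> j \<le> Suc t}" for s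
  define X where "X s = (\<lambda>h. if h \<in> D s then a else p 0)" for s
  have D1: "D (Suc s) = insert (gpow (t-s) r) (D s)" if "s \<le> t" for s
  proof -
    have "(Suc t - Suc s \<le> j \<and> j \<le> Suc t) \<longleftrightarrow> j = t - s \<or> (Suc t - s \<le> j \<and> j \<le> Suc t)" for j
      using that by auto
    then have "D (Suc s) = {gpow j r | j. j = t - s \<or> (Suc t - s \<le> j \<and> j \<le> Suc t)}"
      unfolding D_def by simp
    also have "\<dots> = insert (gpow (t-s) r) (D s)" unfolding D_def by auto
    finally show ?thesis .
  qed
  have g1: "gpow 1 r = r" using gpow_Suc[of 0 r] by simp
  have stepX: "\<tau> (X s) g = X (Suc s) g" if st: "s \<le> t" for s g
  proof (cases "g \<in> D s")
    case True
    then have "X s (0 + g) = a" unfolding X_def by simp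
    then have "\<not> (\<forall>s'\<in>S. X s (s'+g) = p s')" using zS a_ne by blast
    then have "\<tau> (X s) g = X s g" unfolding step[of "X s" g] by (rule if_not_P)
    then show ?thesis using True D1[OF st] unfolding X_def by simp
  next
    case nD: False
    show ?thesis
    proof (cases "g = gpow (t-s) r")
      case True
      have "\<forall>s'\<in>S. X s (s'+g) = p s'"
      proof
        fix s' assume s': "s' \<in> S"
        show "X s (s'+g) = p s'"
        proof (cases "s' = r")
          case True
          have "r + g = gpow (Suc (t-s)) r" using \<open>g = _\<close> by (simp add: gpow_Suc)
          moreover have "Suc (t-s) = Suc t - s" using st by simp
          ultimately have "r + g \<in> D s" unfolding D_def using st by auto
          then show ?thesis using True pr unfolding X_def by simp
        next
          case False
          have "s' + g \<notin> D s"
          proof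
            assume "s' + g \<in> D s"
            then obtain j where j: "s' + g = gpow j r" "Suc t - s \<le> j" "j \<le> Suc t"
              unfolding D_def by blast
            have "s' = gpow j r - gpow (t-s) r" using j(1) \<open>g = _\<close>
              by (metis add_diff_cancel)
            also have "\<dots> = gpow (j - (t-s)) r" using j(2) by (intro gpow_diff) simp
            finally have sj: "s' = gpow (j - (t-s)) r" .
            show False
            proof (cases "j - (t-s) = 1")
              case True then show False using sj g1 False by simp
            next
              case False
              then have "2 \<le> j - (t-s)" "j - (t-s) \<le> Suc t" using j st by auto
              then show False using H sj s' by blast
            qed
          qed
          then show ?thesis unfolding X_def using pc[OF s' False] by simp
        qed
      qed
      then have "\<tau> (X s) g = a" unfolding step[of "X s" g] by (rule if_P)
      then show ?thesis using True D1[OF st] unfolding X_def by simp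
    next
      case False
      have "r + g \<notin> D s"
      proof
        assume "r + g \<in> D s"
        then obtain j where j: "r + g = gpow j r" "Suc t - s \<le> j" "j \<le> Suc t"
          unfolding D_def by blast
        obtain j' where j': "j = Suc j'" using j(2) st by (metis Suc_diff_le not0_implies_Suc le_zero_eq nat.distinct(1))
        have "r + g = r + gpow j' r" using j(1) j' gpow_Suc by metis
        then have gj: "g = gpow j' r" by simp
        show False
        proof (cases "j' = t - s")
          case True then show False using gj False by simp
        next
          case False
          then have "Suc t - s \<le> j'" "j' \<le> Suc t" using j j' st by auto
          then have "g \<in> D s" unfolding D_def using gj by blast
          then show False using nD by simp
        qed
      qed
      then have "X s (r + g) \<noteq> p r" unfolding X_def using pr a_ne by simp
      then have "\<not> (\<forall>s'\<in>S. X s (s'+g) = p s')" using rS by blast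
      then have "\<tau> (X s) g = X s g" unfolding step[of "X s" g] by (rule if_not_P)
      then show ?thesis using nD False D1[OF st] unfolding X_def by simp
    qed
  qed
  have iter: "s \<le> Suc t \<Longrightarrow> (\<tau>^^s) (X 0) = X s" for s
  proof (induction s)
    case 0 then show ?case by simp
  next
    case (Suc s)
    then have "(\<tau>^^Suc s) (X 0) = \<tau> (X s)" by simp
    also have "\<dots> = X (Suc s)" using stepX Suc.prems by (simp add: fun_eq_iff)
    finally show ?case .
  qed
  have "0 \<in> D (Suc t)" unfolding D_def by (auto intro: exI[of _ 0])
  then have 1: "X (Suc t) 0 = a" unfolding X_def by simp
  have "0 \<notin> D t"
  proof
    assume "0 \<in> D t"
    then obtain j where j: "0 = gpow j r" "1 \<le> j" "j \<le> Suc t" unfolding D_def by auto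
    show False
    proof (cases "j = 1")
      case True then show False using j g1 r0 by simp
    next
      case False
      then have "2 \<le> j" using j(2) by simp
      then show False using H j zS by metis
    qed
  qed
  then have 2: "X t 0 = p 0" unfolding X_def by simp
  have "(\<tau>^^Suc t) (X 0) 0 \<noteq> (\<tau>^^t) (X 0) 0"
    using iter[of t] iter[of "Suc t"] 1 2 a_ne by simp
  then show ?thesis by metis
qed

end

locale lca3 = lca +
  assumes pc3: "\<And>s. s \<in> S \<Longrightarrow> s \<noteq> 0 \<Longrightarrow> p s = a"
begin

lemma back3:
  "(\<tau>^^Suc t) x g \<noteq> (\<tau>^^t) x g \<Longrightarrow> \<exists>w. length w = t \<and> set w \<subseteq> S - {0} \<and>
     (\<forall>k\<le>t. (\<tau>^^Suc k) x (theta (drop k w) + g) \<noteq> (\<tau>^^k) x (theta (drop k w) + g))"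
proof (induction t arbitrary: g)
  case 0
  then show ?case by (intro exI[of _ "[]"]) (simp add: theta_def)
next
  case (Suc t)
  define y where "y = (\<tau>^^t) x"
  have "\<tau> (\<tau> y) g \<noteq> \<tau> y g" using Suc.prems unfolding y_def by simp
  from back1[OF this] obtain s where s: "s \<in> S" "s \<noteq> 0" "\<tau> y (s+g) \<noteq> y (s+g)" by blast
  then have "(\<tau>^^Suc t) x (s+g) \<noteq> (\<tau>^^t) x (s+g)" unfolding y_def by simp
  from Suc.IH[OF this] obtain w' where w': "length w' = t" "set w' \<subseteq> S - {0}"
    "\<forall>k\<le>t. (\<tau>^^Suc k) x (theta (drop k w') + (s+g)) \<noteq> (\<tau>^^k) x (theta (drop k w') + (s+g))"
    by blast
  define w where "w = w' @ [s]"
  have "\<forall>k\<le>Suc t. (\<tau>^^Suc k) x (theta (drop k w) + g) \<noteq> (\<tau>^^k) x (theta (drop k w) + g)"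
  proof (intro allI impI)
    fix k assume k: "k \<le> Suc t"
    show "(\<tau>^^Suc k) x (theta (drop k w) + g) \<noteq> (\<tau>^^k) x (theta (drop k w) + g)"
    proof (cases "k = Suc t")
      case True
      then have "drop k w = []" unfolding w_def using w'(1) by simp
      then show ?thesis using True Suc.prems by (simp add: theta_def)
    next
      case False
      then have kt: "k \<le> t" using k by simp
      then have "drop k w = drop k w' @ [s]" unfolding w_def using w'(1) by simp
      then have "theta (drop k w) + g = theta (drop k w') + (s+g)"
        by (simp add: theta_def add.assoc)
      then show ?thesis using w'(3) kt by simp
    qed
  qed
  moreover have "length w = Suc t" "set w \<subseteq> S - {0}" unfolding w_def using w' s by auto
  ultimately show ?case by blast
qed

lemma no_bad:
  assumes ch: "\<forall>k\<le>t. (\<tau>^^Suc k) x (theta (drop k w) + g) \<noteq> (\<tau>^^k) x (theta (drop k w) + g)"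
    and len: "length w = t" and sw: "subword v w"
  shows "- theta v \<notin> S"
proof
  assume vS: "- theta v \<in> S"
  from sw obtain ps ss where w: "w = ps @ v @ ss" and vne: "v \<noteq> []"
    unfolding subword_def sublist_def by blast
  define k where "k = length ps"
  define m where "m = length ps + length v"
  have km: "k < m" "m \<le> t" using vne len w unfolding k_def m_def by auto
  have dk: "drop k w = v @ ss" and dm: "drop m w = ss" unfolding k_def m_def w by simp_all
  define hm where "hm = theta ss + g"
  have hk: "theta (drop k w) + g = theta v + hm" unfolding dk hm_def by (simp add: theta_def add.assoc)
  have hm': "theta (drop m w) + g = hm" unfolding dm hm_def ..
  have chk: "\<tau> ((\<tau>^^k) x) (theta v + hm) \<noteq> (\<tau>^^k) x (theta v + hm)" using ch km hk by (metis funpow.simps(2) comp_apply less_imp_le order.strict_trans2)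
  have chm: "\<tau> ((\<tau>^^m) x) hm \<noteq> (\<tau>^^m) x hm" using ch km hm' by (metis funpow.simps(2) comp_apply)
  have Cm: "(\<tau>^^m) x hm = p 0" using change(2)[OF chm] .
  have Ck: "\<forall>s\<in>S. (\<tau>^^k) x (s + (theta v + hm)) = p s" using change(3)[OF chk] .
  have e: "- theta v + (theta v + hm) = hm" by (simp add: add.assoc[symmetric])
  show False
  proof (cases "- theta v = 0")
    case True
    then have "theta v = 0" by simp
    then have "(\<tau>^^Suc k) x hm = a" using change(1)[OF chk] by simp
    then have "(\<tau>^^m) x hm = a" using persist km by (metis Suc_leI)
    then show False using Cm a_ne by simp
  next
    case False
    then have "(\<tau>^^k) x hm = a" using Ck vS pc3 e by metis
    then have "(\<tau>^^m) x hm = a" using persist km by (metis less_imp_le)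
    then show False using Cm a_ne by simp
  qed
qed

lemma upper3:
  assumes n: "n \<ge> 2" and wp: "word_property S n"
  shows "\<tau>^^n = \<tau>^^(n-1)"
proof -
  obtain m where m: "n = Suc m" using n by (metis Suc_le_D numeral_2_eq_2 Suc_leD)
  have "(\<tau>^^Suc m) x g = (\<tau>^^m) x g" for x g
  proof (rule ccontr)
    assume ch: "(\<tau>^^Suc m) x g \<noteq> (\<tau>^^m) x g"
    from back3[OF ch] obtain w where w: "length w = m" "set w \<subseteq> S - {0}"
      "\<forall>k\<le>m. (\<tau>^^Suc k) x (theta (drop k w) + g) \<noteq> (\<tau>^^k) x (theta (drop k w) + g)" by blast
    then obtain v where "subword v w" "- theta v \<in> S" using wp m unfolding word_property_def by auto
    then show False using no_bad[OF w(3) w(1)] by blast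
  qed
  then show ?thesis using m by (simp add: fun_eq_iff del: funpow.simps)
qed

lemma lower3':
  assumes len: "length w = t" and wS: "set w \<subseteq> S - {0}"
    and good: "\<forall>v. subword v w \<longrightarrow> - theta v \<notin> S"
  shows "\<tau>^^Suc t \<noteq> \<tau>^^t"
proof -
  define h where "h k = theta (drop k w)" for k
  define H where "H s = {h k | k. s \<le> k \<and> k \<le> t}" for s
  define X where "X s = (\<lambda>z. if z \<in> H s then p 0 else a)" for s
  have G1: "h k = w!k + h (Suc k)" if "k < t" for k
    unfolding h_def theta_def using that len Cons_nth_drop_Suc[of k w] by (metis sum_list.Cons)
  have G2: "\<exists>v. subword v w \<and> h s = theta v + h m" if "s < m" "m \<le> t" for s m
  proof -
    define v where "v = take (m-s) (drop s w)"
    have "drop s w = v @ drop m w" unfolding v_def using that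
      by (metis append_take_drop_id drop_drop le_add_diff_inverse2 less_imp_le)
    then have "h s = theta v + h m" unfolding h_def theta_def by simp
    moreover have "v \<noteq> []" unfolding v_def using that len by simp
    moreover have "sublist v w"
    proof -
      have "w = take s w @ v @ drop (m-s) (drop s w)" unfolding v_def
        by (simp only: append_take_drop_id)
      then show ?thesis by (metis sublist_appendI)
    qed
    ultimately show ?thesis unfolding subword_def by blast
  qed
  have HS: "H (Suc s) \<subseteq> H s" for s unfolding H_def by auto
  have stepX: "\<tau> (X s) g = X (Suc s) g" if st: "s \<le> t" for s g
  proof (cases "g \<in> H (Suc s)")
    case True
    then obtain k where k: "g = h k" "Suc s \<le> k" "k \<le> t" unfolding H_def by blast
    then obtain k' where k': "k = Suc k'" by (metis Suc_le_D)
    have kt: "k' < t" using k k' by simp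
    have sw: "w!k' \<in> S" "w!k' \<noteq> 0" using wS kt len nth_mem by fastforce+
    have "w!k' + g = h k'" using G1[OF kt] k k' by simp
    moreover have "h k' \<in> H s" unfolding H_def using k k' by auto
    ultimately have "X s (w!k' + g) \<noteq> p (w!k')" unfolding X_def using pc3[OF sw] a_ne by simp
    then have "\<not> (\<forall>s'\<in>S. X s (s'+g) = p s')" using sw by blast
    then have "\<tau> (X s) g = X s g" unfolding step[of "X s" g] by (rule if_not_P)
    then show ?thesis using True HS unfolding X_def by auto
  next
    case nH: False
    show ?thesis
    proof (cases "g \<in> H s")
      case False
      then have "X s (0 + g) = a" unfolding X_def by simp
      then have "\<not> (\<forall>s'\<in>S. X s (s'+g) = p s')" using zS a_ne by blast
      then have "\<tau> (X s) g = X s g" unfolding step[of "X s" g] by (rule if_not_P)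
      then show ?thesis using False nH unfolding X_def by simp
    next
      case True
      then obtain k where k: "g = h k" "s \<le> k" "k \<le> t" unfolding H_def by blast
      have "k = s"
      proof (rule ccontr)
        assume "k \<noteq> s"
        then have "g \<in> H (Suc s)" unfolding H_def using k by auto
        then show False using nH by simp
      qed
      then have gs: "g = h s" using k by simp
      have "\<forall>s'\<in>S. X s (s'+g) = p s'"
      proof
        fix s' assume s': "s' \<in> S"
        show "X s (s'+g) = p s'"
        proof (cases "s' = 0")
          case True then show ?thesis using \<open>g \<in> H s\<close> unfolding X_def by simp
        next
          case False
          have "s' + g \<notin> H s"
          proof
            assume "s' + g \<in> H s"
            then obtain m where m: "s' + h s = h m" "s \<le> m" "m \<le> t" unfolding H_def gs by blast
            show False
            proof (cases "m = s")
              case True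
              then have "s' + h s = 0 + h s" using m(1) by simp
              then have "s' = 0" by (metis add_right_cancel)
              then show False using False by simp
            next
              case False
              then have "s < m" using m by simp
              from G2[OF this m(3)] obtain v where v: "subword v w" "h s = theta v + h m" by blast
              have "s' + theta v + h m = 0 + h m" using m(1) v(2) by (simp add: add.assoc)
              then have "s' + theta v = 0" by (metis add_right_cancel)
              then have "s' = - theta v" by (metis add_eq_0_iff2 eq_neg_iff_add_eq_0)
              then show False using good v(1) s' by blast
            qed
          qed
          then show ?thesis unfolding X_def using pc3[OF s' False] by simp
        qed
      qed
      then have "\<tau> (X s) g = a" unfolding step[of "X s" g] by (rule if_P)
      then show ?thesis using nH unfolding X_def by simp
    qed
  qed
  have iter: "s \<le> Suc t \<Longrightarrow> (\<tau>^^s) (X 0) = X s" for s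
  proof (induction s)
    case 0 then show ?case by simp
  next
    case (Suc s)
    then have "(\<tau>^^Suc s) (X 0) = \<tau> (X s)" by simp
    also have "\<dots> = X (Suc s)" using stepX Suc.prems by (simp add: fun_eq_iff)
    finally show ?case .
  qed
  have "h t = 0" unfolding h_def theta_def using len by simp
  then have "0 \<in> H t" unfolding H_def by auto
  then have 2: "X t 0 = p 0" unfolding X_def by simp
  have "H (Suc t) = {}" unfolding H_def by auto
  then have 1: "X (Suc t) 0 = a" unfolding X_def by simp
  have "(\<tau>^^Suc t) (X 0) 0 \<noteq> (\<tau>^^t) (X 0) 0"
    using iter[of t] iter[of "Suc t"] 1 2 a_ne by simp
  then show ?thesis by metis
qed

lemma lower3:
  assumes H: "\<forall>k. 2 \<le> k \<longrightarrow> k \<le> Suc t \<longrightarrow> \<not> word_property S k"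
  shows "\<tau>^^Suc t \<noteq> \<tau>^^t"
proof -
  have "\<not> word_property S (Suc t)"
  proof (cases t)
    case 0
    have "\<not> subword v []" for v :: "'g list" unfolding subword_def by simp
    then show ?thesis unfolding word_property_def using 0 by auto
  next
    case (Suc t') then show ?thesis using H by simp
  qed
  then obtain w where "length w = t" "set w \<subseteq> S - {0}" "\<forall>v. subword v w \<longrightarrow> - theta v \<notin> S"
    unfolding word_property_def by auto
  then show ?thesis using lower3' by blast
qed

end

theorem theorem1:
  fixes \<tau> :: "('g::group_add \<Rightarrow> 'a) \<Rightarrow> ('g \<Rightarrow> 'a)"
    and S :: "'g set" and \<mu> :: "('g \<Rightarrow> 'a) \<Rightarrow> 'a" and p :: "'g \<Rightarrow> 'a"
    and a :: 'a and r :: 'g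
  assumes two: "\<exists>x y :: 'a. x \<noteq> y"
    and lazy: "lazy_with \<tau> S \<mu> p"
    and a_def: "a = \<mu> p"
    and qc: "quasi_constant_at S p r"
  shows "((\<forall>s\<in>S. a \<noteq> p s) \<longrightarrow> ord \<tau> = 2)
    \<and> (r \<noteq> 0 \<and> a = p r \<longrightarrow>
        (finite (powers_set \<tau>) \<longleftrightarrow> (\<exists>n\<ge>2. gpow n r \<in> S))
        \<and> ((\<exists>n\<ge>2. gpow n r \<in> S) \<longrightarrow> ord \<tau> = (LEAST n. n \<ge> 2 \<and> gpow n r \<in> S)))
    \<and> (r = 0 \<and> (\<forall>s\<in>S - {0}. a = p s) \<longrightarrow>
        (finite (powers_set \<tau>) \<longleftrightarrow> (\<exists>n\<ge>2. word_property S n))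
        \<and> ((\<exists>n\<ge>2. word_property S n) \<longrightarrow> ord \<tau> = (LEAST n. n \<ge> 2 \<and> word_property S n)))"
proof -
  have tau: "\<And>x g. \<tau> x g = \<mu> (restrict (shift g x) S)" and zS: "0 \<in> S"
    and pE: "p \<in> extensional S" and mu: "\<forall>z \<in> extensional S. (\<mu> z = z 0 \<longleftrightarrow> z \<noteq> p)"
    using lazy unfolding lazy_with_def local_defining_map_def by auto
  have a_ne: "a \<noteq> p 0" using bspec[OF mu pE] a_def by simp
  have stp: "\<tau> y g = (if (\<forall>s\<in>S. y (s+g) = p s) then a else y g)" for y g
  proof -
    have eq: "restrict (shift g y) S = p \<longleftrightarrow> (\<forall>s\<in>S. y (s+g) = p s)"
    proof
      assume "restrict (shift g y) S = p"
      then show "\<forall>s\<in>S. y (s+g) = p s" unfolding shift_def by (metis restrict_apply')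
    next
      assume A: "\<forall>s\<in>S. y (s+g) = p s"
      show "restrict (shift g y) S = p"
      proof
        fix z show "restrict (shift g y) S z = p z"
          using A pE unfolding shift_def by (cases "z \<in> S") (auto simp: extensional_def)
      qed
    qed
    show ?thesis
    proof (cases "\<forall>s\<in>S. y (s+g) = p s")
      case True
      then show ?thesis using tau[of y g] eq a_def by simp
    next
      case False
      then have "restrict (shift g y) S \<noteq> p" using eq by simp
      moreover have "restrict (shift g y) S \<in> extensional S" by simp
      ultimately have "\<mu> (restrict (shift g y) S) = restrict (shift g y) S 0"
        using bspec[OF mu] by blast
      then have "\<tau> y g = y g" using tau[of y g] zS by (simp add: shift_def)
      then show ?thesis unfolding if_not_P[OF False] .
    qed
  qed
  interpret L: lca \<tau> S p a using stp a_ne zS by unfold_locales auto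
  from qc have rS: "r \<in> S" and nc: "\<not> constant_on_set S p"
    and cst: "constant_on_set (S - {r}) p" unfolding quasi_constant_at_def by auto
  obtain c where c: "\<And>s. s \<in> S - {r} \<Longrightarrow> p s = c" using cst unfolding constant_on_set_def by blast
  have P1: "(\<forall>s\<in>S. a \<noteq> p s) \<longrightarrow> ord \<tau> = 2" using L.case1 by blast
  have P2: "r \<noteq> 0 \<and> a = p r \<longrightarrow>
        (finite (powers_set \<tau>) \<longleftrightarrow> (\<exists>n\<ge>2. gpow n r \<in> S))
        \<and> ((\<exists>n\<ge>2. gpow n r \<in> S) \<longrightarrow> ord \<tau> = (LEAST n. n \<ge> 2 \<and> gpow n r \<in> S))"
  proof
    assume A: "r \<noteq> 0 \<and> a = p r"
    have "c = p 0" using c[of 0] zS A by simp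
    then have pc: "\<And>s. s \<in> S \<Longrightarrow> s \<noteq> r \<Longrightarrow> p s = p 0" using c by blast
    interpret L2: lca2 \<tau> S p a r using A rS pc by unfold_locales auto
    show "(finite (powers_set \<tau>) \<longleftrightarrow> (\<exists>n\<ge>2. gpow n r \<in> S))
        \<and> ((\<exists>n\<ge>2. gpow n r \<in> S) \<longrightarrow> ord \<tau> = (LEAST n. n \<ge> 2 \<and> gpow n r \<in> S))"
      by (rule L.combine[of "\<lambda>n. gpow n r \<in> S"]) (use L2.upper2 L2.lower2 in auto)
  qed
  have P3: "r = 0 \<and> (\<forall>s\<in>S - {0}. a = p s) \<longrightarrow>
        (finite (powers_set \<tau>) \<longleftrightarrow> (\<exists>n\<ge>2. word_property S n))
        \<and> ((\<exists>n\<ge>2. word_property S n) \<longrightarrow> ord \<tau> = (LEAST n. n \<ge> 2 \<and> word_property S n))"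
  proof
    assume A: "r = 0 \<and> (\<forall>s\<in>S - {0}. a = p s)"
    interpret L3: lca3 \<tau> S p a using A by unfold_locales auto
    show "(finite (powers_set \<tau>) \<longleftrightarrow> (\<exists>n\<ge>2. word_property S n))
        \<and> ((\<exists>n\<ge>2. word_property S n) \<longrightarrow> ord \<tau> = (LEAST n. n \<ge> 2 \<and> word_property S n))"
      by (rule L.combine[of "word_property S"]) (use L3.upper3 L3.lower3 in auto)
  qed
  show ?thesis using P1 P2 P3 by blast
qed

end
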